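(* Assume $\cos\theta_{\max}>0$, let $f\in\mathcal H$, $b=-S^\perp T^\perp Sf$, and $K=(S^\perp T^\perp)|_{\mathcal S^\perp}$. Let $x^*\in\mathcal S^\perp$ be the normal (minimal-norm) solution of $Kx=b$. Define $x_0=0$ and $x_m=(I-K)x_{m-1}+b$ for $m\ge1$ (equivalently $x_m=S^\perp T(Sf+x_{m-1})$). Then for all $m\ge0$, $$\|x_m-x^*\|\le(1-\cos^2\theta_{\max})^m\,\|x^*\|.$$
   Context: $\mathcal H$ is a Hilbert space; $\mathcal S,\mathcal T\subseteq\mathcal H$ closed subspaces with orthogonal projectors $S,T$; $S^\perp=I-S$, $T^\perp=I-T$. Angles: for closed subspaces $\mathcal F,\mathcal G$ with orthogonal projectors $P_{\mathcal F},P_{\mathcal G}$, $\hat\Theta(\mathcal F,\mathcal G)=\{\arccos\sigma:\ \sigma\ge0,\ \sigma^2\in\Sigma((P_{\mathcal F}P_{\mathcal G})|_{\mathcal F})\}$ ($\Sigma$ = spectrum), $\Theta(\mathcal F,\mathcal G)=\hat\Theta(\mathcal F,\mathcal G)\cap\hat\Theta(\mathcal G,\mathcal F)$, and $\theta_{\max}=\sup(\Theta(\mathcal S,\mathcal T)\setminus\{\pi/2\})$ with $\sup\emptyset=0$. *)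

theory Defs
  imports "HOL-Analysis.Analysis"
begin

definition closed_subspace :: "'a::real_inner set \<Rightarrow> bool" where
  "closed_subspace V \<longleftrightarrow> subspace V \<and> closed V"

definition orth_proj :: "'a::real_inner set \<Rightarrow> 'a \<Rightarrow> 'a" where
  "orth_proj V x = (THE y. y \<in> V \<and> x - y \<in> orthogonal_comp V)"

definition spectrum_on :: "'a::real_normed_vector set \<Rightarrow> ('a \<Rightarrow> 'a) \<Rightarrow> real set" where
  "spectrum_on F A = {l. \<not> (\<exists>B. (\<forall>x\<in>F. B x \<in> F) \<and>
       (\<exists>C. \<forall>x\<in>F. norm (B x) \<le> C * norm x) \<and>
       (\<forall>x\<in>F. B (A x - l *\<^sub>R x) = x \<and> A (B x) - l *\<^sub>R B x = x))}"

definition hatTheta :: "'a::real_inner set \<Rightarrow> 'a set \<Rightarrow> real set" where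
  "hatTheta F G = {arccos s | s. s \<ge> 0 \<and> s\<^sup>2 \<in> spectrum_on F (\<lambda>x. orth_proj F (orth_proj G x))}"

definition Theta :: "'a::real_inner set \<Rightarrow> 'a set \<Rightarrow> real set" where
  "Theta F G = hatTheta F G \<inter> hatTheta G F"

definition theta_max :: "'a::real_inner set \<Rightarrow> 'a set \<Rightarrow> real" where
  "theta_max S T = (let A = Theta S T - {pi/2} in if A = {} then 0 else Sup A)"

end

theory Submission
  imports Defs
begin


lemma closed_orthogonal_comp: "closed (orthogonal_comp (V::'a::real_inner set))"
proof -
  have "orthogonal_comp V = (\<Inter>y\<in>V. {x. inner y x = 0})"
    by (auto simp: orthogonal_comp_def orthogonal_def)
  moreover have "closed {x. inner y x = (0::real)}" for y :: 'a
    by (intro closed_Collect_eq continuous_intros)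
  ultimately show ?thesis by auto
qed

lemma closed_subspace_orthogonal_comp: "closed_subspace (orthogonal_comp (V::'a::real_inner set))"
  by (simp add: closed_subspace_def closed_orthogonal_comp subspace_orthogonal_comp)

lemma proj_exists:
  fixes V :: "'a::{real_inner,complete_space} set"
  assumes cs: "closed_subspace V"
  shows "\<exists>y. y \<in> V \<and> x - y \<in> orthogonal_comp V"
proof -
  have sV: "subspace V" and cV: "closed V" using cs by (auto simp: closed_subspace_def)
  have V0: "0 \<in> V" using sV by (simp add: subspace_0)
  define D where "D = (\<lambda>v. norm (x - v)) ` V"
  define d where "d = Inf D"
  have Dne: "D \<noteq> {}" using V0 by (auto simp: D_def)
  have Dbdd: "bdd_below D" unfolding D_def by (rule bdd_belowI[of _ 0]) auto
  have dle: "d \<le> norm (x - v)" if "v \<in> V" for v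
    unfolding d_def using that Dbdd by (auto simp: D_def intro: cInf_lower)
  have d0: "0 \<le> d" unfolding d_def using Dne by (intro cInf_greatest) (auto simp: D_def)
  have ex: "\<exists>v\<in>V. (norm (x - v))\<^sup>2 < d\<^sup>2 + 1 / real (Suc n)" for n
  proof -
    define e where "e = min 1 ((1 / real (Suc n)) / (2*d+1))"
    have e0: "e > 0" using d0 by (auto simp: e_def)
    have "d < d + e" using e0 by simp
    then obtain v where v: "v \<in> V" "norm (x - v) < d + e"
      using cInf_lessD[OF Dne, of "d+e"] unfolding d_def by (auto simp: D_def)
    have "(norm (x - v))\<^sup>2 < (d + e)\<^sup>2"
      using v(2) by (intro power_strict_mono) auto
    also have "(d+e)\<^sup>2 = d\<^sup>2 + e * (2*d + e)" by (simp add: power2_eq_square algebra_simps)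
    also have "e * (2*d + e) \<le> e * (2*d+1)" using e0 by (intro mult_left_mono) (auto simp: e_def)
    also have "e * (2*d+1) \<le> ((1 / real (Suc n)) / (2*d+1)) * (2*d+1)"
      using d0 by (intro mult_right_mono) (auto simp: e_def)
    also have "\<dots> = 1 / real (Suc n)" using d0 by simp
    finally show ?thesis using v by auto
  qed
  then have "\<forall>n. \<exists>v. v \<in> V \<and> (norm (x - v))\<^sup>2 < d\<^sup>2 + 1 / real (Suc n)" by blast
  then obtain vs where vs0: "\<forall>n. vs n \<in> V \<and> (norm (x - vs n))\<^sup>2 < d\<^sup>2 + 1 / real (Suc n)"
    by (rule choice[THEN exE])
  then have vs: "\<And>n. vs n \<in> V" "\<And>n. (norm (x - vs n))\<^sup>2 < d\<^sup>2 + 1 / real (Suc n)"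
    by auto
  have par: "(norm (vs m - vs n))\<^sup>2 \<le> 2 / real (Suc n) + 2 / real (Suc m)" for m n
  proof -
    have mid: "(1/2) *\<^sub>R (vs n + vs m) \<in> V"
      using vs(1) sV by (intro subspace_scale subspace_add) auto
    have "d\<^sup>2 \<le> (norm (x - (1/2) *\<^sub>R (vs n + vs m)))\<^sup>2"
      using dle[OF mid] d0 by (intro power_mono) auto
    moreover have "(norm (vs m - vs n))\<^sup>2 = 2 * (norm (x - vs n))\<^sup>2 + 2 * (norm (x - vs m))\<^sup>2
        - 4 * (norm (x - (1/2) *\<^sub>R (vs n + vs m)))\<^sup>2"
      unfolding power2_norm_eq_inner
      by (simp add: inner_diff_left inner_diff_right inner_add_left inner_add_right
          inner_commute algebra_simps)
    ultimately show ?thesis using vs(2)[of n] vs(2)[of m] by linarith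
  qed
  have "Cauchy vs"
  proof (rule CauchyI)
    fix e :: real assume e: "0 < e"
    obtain M where M0: "real M > 4 / e\<^sup>2" using reals_Archimedean2 by blast
    have e2: "e\<^sup>2 > 0" using e by simp
    have "4 / e\<^sup>2 < real (Suc M)" using M0 by simp
    then have "4 < real (Suc M) * e\<^sup>2" using e2 by (simp add: divide_less_eq)
    then have M: "4 / real (Suc M) < e\<^sup>2" by (simp add: divide_less_eq mult.commute)
    show "\<exists>M. \<forall>m\<ge>M. \<forall>n\<ge>M. norm (vs m - vs n) < e"
    proof (intro exI allI impI)
      fix m n assume mn: "M \<le> m" "M \<le> n"
      have "2 / real (Suc n) \<le> 2 / real (Suc M)" "2 / real (Suc m) \<le> 2 / real (Suc M)"
        using mn by (auto simp: frac_le)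
      then have "(norm (vs m - vs n))\<^sup>2 < e\<^sup>2" using par[of m n] M by linarith
      then show "norm (vs m - vs n) < e" using e by (smt (verit) power_mono norm_ge_zero)
    qed
  qed
  then obtain y where lim: "vs \<longlonglongrightarrow> y" by (auto simp: Cauchy_convergent_iff convergent_def)
  have yV: "y \<in> V" using closed_sequentially[OF cV _ lim] vs(1) by auto
  have inv0: "(\<lambda>n. 1 / real (Suc n)) \<longlonglongrightarrow> 0"
    using LIMSEQ_inverse_real_of_nat by (simp add: inverse_eq_divide)
  have "(\<lambda>n. (norm (x - vs n))\<^sup>2) \<longlonglongrightarrow> (norm (x - y))\<^sup>2"
    by (intro tendsto_power tendsto_norm tendsto_diff tendsto_const lim)
  moreover from inv0 have "(\<lambda>n. d\<^sup>2 + 1 / real (Suc n)) \<longlonglongrightarrow> d\<^sup>2 + 0"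
    by (rule tendsto_add[OF tendsto_const])
  ultimately have "(norm (x - y))\<^sup>2 \<le> d\<^sup>2 + 0"
  proof (rule LIMSEQ_le)
    show "\<exists>N. \<forall>n\<ge>N. (norm (x - vs n))\<^sup>2 \<le> d\<^sup>2 + 1 / real (Suc n)"
      using vs(2) less_imp_le by auto
  qed
  then have ny: "norm (x - y) \<le> d" using d0 power_le_imp_le_base[of "norm (x - y)" 1 d] by simp
  have "x - y \<in> orthogonal_comp V"
    unfolding orthogonal_comp_def orthogonal_def
  proof (intro CollectI ballI)
    fix w assume wV: "w \<in> V"
    define c where "c = inner w (x - y)"
    define N where "N = (norm w)\<^sup>2"
    define t where "t = c / (N + 1)"
    have N0: "N \<ge> 0" by (simp add: N_def)
    have "y + t *\<^sub>R w \<in> V" using yV wV sV by (intro subspace_add subspace_scale) auto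
    then have "norm (x - y) \<le> norm (x - (y + t *\<^sub>R w))" using dle ny by fastforce
    then have "(norm (x - y))\<^sup>2 \<le> (norm (x - y - t *\<^sub>R w))\<^sup>2"
      by (metis diff_diff_eq norm_ge_zero power_mono)
    also have "\<dots> = (norm (x - y))\<^sup>2 - 2 * t * c + t\<^sup>2 * N"
      unfolding c_def N_def power2_norm_eq_inner
      by (simp add: inner_diff_left inner_diff_right inner_commute algebra_simps power2_eq_square)
    finally have "t * (2 * c - t * N) \<le> 0" by (simp add: power2_eq_square algebra_simps)
    moreover have "t * (2 * c - t * N) = c\<^sup>2 * (N + 2) / (N + 1)\<^sup>2"
      using N0 by (simp add: t_def field_simps power2_eq_square)
    ultimately have "c\<^sup>2 * (N + 2) \<le> 0" using N0
      by (simp add: divide_le_0_iff)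
    then have "c\<^sup>2 \<le> 0" using N0 by (simp add: mult_le_0_iff)
    then show "inner w (x - y) = 0" by (simp add: c_def)
  qed
  then show ?thesis using yV by blast
qed

lemma orth_proj_char:
  fixes V :: "'a::{real_inner,complete_space} set"
  assumes cs: "closed_subspace V"
  shows "orth_proj V x \<in> V \<and> x - orth_proj V x \<in> orthogonal_comp V"
proof -
  have sV: "subspace V" using cs by (simp add: closed_subspace_def)
  have uniq: "y = y'" if "y \<in> V" "x - y \<in> orthogonal_comp V" "y' \<in> V" "x - y' \<in> orthogonal_comp V" for y y'
  proof -
    have "y - y' \<in> V" using that sV by (simp add: subspace_diff)
    moreover have "y - y' = (x - y') - (x - y)" by simp
    then have "y - y' \<in> orthogonal_comp V" using that subspace_orthogonal_comp
      by (metis subspace_diff)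
    ultimately have "inner (y - y') (y - y') = 0" by (auto simp: orthogonal_comp_def orthogonal_def)
    then show ?thesis by simp
  qed
  obtain y where y: "y \<in> V" "x - y \<in> orthogonal_comp V" using proj_exists[OF cs, of x] by blast
  show ?thesis unfolding orth_proj_def
    by (rule theI[of "\<lambda>y. y \<in> V \<and> x - y \<in> orthogonal_comp V" y]) (use y uniq in blast)+
qed

lemma orth_proj_unique:
  fixes V :: "'a::{real_inner,complete_space} set"
  assumes cs: "closed_subspace V" and "y \<in> V" "x - y \<in> orthogonal_comp V"
  shows "orth_proj V x = y"
proof -
  have sV: "subspace V" using cs by (simp add: closed_subspace_def)
  have c: "orth_proj V x \<in> V" "x - orth_proj V x \<in> orthogonal_comp V" using orth_proj_char[OF cs] by auto
  have "orth_proj V x - y \<in> V" using c assms sV by (simp add: subspace_diff)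
  moreover have "orth_proj V x - y = (x - y) - (x - orth_proj V x)" by simp
  then have "orth_proj V x - y \<in> orthogonal_comp V" using c assms subspace_orthogonal_comp
    by (metis subspace_diff)
  ultimately have "inner (orth_proj V x - y) (orth_proj V x - y) = 0" by (auto simp: orthogonal_comp_def orthogonal_def)
  then show ?thesis by simp
qed

lemma oc_inner: "z \<in> orthogonal_comp V \<Longrightarrow> v \<in> V \<Longrightarrow> inner v z = 0"
  by (auto simp: orthogonal_comp_def orthogonal_def)

lemma oc_inner': "z \<in> orthogonal_comp V \<Longrightarrow> v \<in> V \<Longrightarrow> inner z v = 0"
  by (auto simp: orthogonal_comp_def orthogonal_def inner_commute)

locale cproj =
  fixes V :: "'a::{real_inner,complete_space} set"
  assumes cs: "closed_subspace V"
begin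

abbreviation "p \<equiv> orth_proj V"

lemma sV: "subspace V" using cs by (simp add: closed_subspace_def)
lemma cV: "closed V" using cs by (simp add: closed_subspace_def)

lemma p_in: "p x \<in> V" using orth_proj_char[OF cs] by auto
lemma p_oc: "x - p x \<in> orthogonal_comp V" using orth_proj_char[OF cs] by auto
lemma p_id: "v \<in> V \<Longrightarrow> p v = v"
  by (rule orth_proj_unique[OF cs]) (auto simp: orthogonal_comp_def orthogonal_def)
lemma p_zero: "z \<in> orthogonal_comp V \<Longrightarrow> p z = 0"
  by (rule orth_proj_unique[OF cs]) (auto simp: sV subspace_0)

lemma p_add: "p (x + y) = p x + p y"
proof (rule orth_proj_unique[OF cs])
  show "p x + p y \<in> V" using p_in sV by (simp add: subspace_add)
  have "x + y - (p x + p y) = (x - p x) + (y - p y)" by simp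
  then show "x + y - (p x + p y) \<in> orthogonal_comp V" using p_oc subspace_orthogonal_comp
    by (metis subspace_add)
qed

lemma p_scale: "p (c *\<^sub>R x) = c *\<^sub>R p x"
proof (rule orth_proj_unique[OF cs])
  show "c *\<^sub>R p x \<in> V" using p_in sV by (simp add: subspace_scale)
  have "c *\<^sub>R x - c *\<^sub>R p x = c *\<^sub>R (x - p x)" by (simp add: algebra_simps)
  then show "c *\<^sub>R x - c *\<^sub>R p x \<in> orthogonal_comp V" using p_oc subspace_orthogonal_comp
    by (metis subspace_scale)
qed

lemma p_pyth: "(norm x)\<^sup>2 = (norm (p x))\<^sup>2 + (norm (x - p x))\<^sup>2"
proof -
  have "inner (p x) (x - p x) = 0" using oc_inner[OF p_oc p_in] .
  then have "inner x x = inner (p x) (p x) + inner (x - p x) (x - p x)"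
    by (simp add: inner_diff_left inner_diff_right inner_commute)
  then show ?thesis by (simp add: power2_norm_eq_inner)
qed

lemma p_norm: "norm (p x) \<le> norm x"
proof -
  have "(norm (p x))\<^sup>2 \<le> (norm x)\<^sup>2" using p_pyth[of x] zero_le_power2[of "norm (x - p x)"] by linarith
  then show ?thesis using power2_le_imp_le norm_ge_zero by blast
qed

lemma p_qnorm: "norm (x - p x) \<le> norm x"
proof -
  have "(norm (x - p x))\<^sup>2 \<le> (norm x)\<^sup>2" using p_pyth[of x] zero_le_power2[of "norm (p x)"] by linarith
  then show ?thesis using power2_le_imp_le norm_ge_zero by blast
qed

lemma p_linear: "linear p"
  by (rule linearI) (simp_all add: p_add p_scale)

lemma p_bl: "bounded_linear p"
  by (rule bounded_linear_intro[where K=1]) (simp_all add: p_add p_scale p_norm)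

lemma p_sa: "inner (p x) y = inner x (p y)"
proof -
  have "inner (p x) y = inner (p x) (p y) + inner (p x) (y - p y)" by (simp add: inner_diff_right)
  also have "inner (p x) (y - p y) = 0" using oc_inner[OF p_oc p_in] .
  also have "inner x (p y) = inner (p x) (p y) + inner (x - p x) (p y)" by (simp add: inner_diff_left)
  moreover have "inner (x - p x) (p y) = 0" using oc_inner'[OF p_oc p_in] .
  ultimately show ?thesis by simp
qed

lemma q_in: "x - p x \<in> orthogonal_comp V" by (rule p_oc)
lemma q_id: "z \<in> orthogonal_comp V \<Longrightarrow> z - p z = z" by (simp add: p_zero)
lemma q_zero: "v \<in> V \<Longrightarrow> v - p v = 0" by (simp add: p_id)
lemma q_bl: "bounded_linear (\<lambda>x. x - p x)"
  by (intro bounded_linear_sub bounded_linear_ident p_bl)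
lemma q_sa: "inner (x - p x) y = inner x (y - p y)"
  by (simp add: inner_diff_left inner_diff_right p_sa)
lemma p_q: "p (x - p x) = 0" by (simp add: p_zero p_oc)
lemma q_p: "p x - p (p x) = 0" by (simp add: p_id p_in)
lemma p_idem: "p (p x) = p x" by (simp add: p_id p_in)
lemma inner_p: "inner (p x) x = (norm (p x))\<^sup>2"
proof -
  have "inner (p x) x = inner (p (p x)) x" by (simp add: p_idem)
  also have "\<dots> = inner (p x) (p x)" by (rule p_sa)
  finally show ?thesis by (simp add: power2_norm_eq_inner)
qed

end



lemma not_spec_iff: "l \<notin> spectrum_on F M \<longleftrightarrow> (\<exists>B. (\<forall>x\<in>F. B x \<in> F) \<and>
       (\<exists>C. \<forall>x\<in>F. norm (B x) \<le> C * norm x) \<and>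
       (\<forall>x\<in>F. B (M x - l *\<^sub>R x) = x \<and> M (B x) - l *\<^sub>R B x = x))"
  by (simp add: spectrum_on_def)

lemma spec_cong:
  assumes "\<forall>x\<in>F. M x = M' x" "l \<notin> spectrum_on F M"
  shows "l \<notin> spectrum_on F M'"
proof -
  obtain B C where B: "\<forall>x\<in>F. B x \<in> F" "\<forall>x\<in>F. norm (B x) \<le> C * norm x"
     "\<forall>x\<in>F. B (M x - l *\<^sub>R x) = x \<and> M (B x) - l *\<^sub>R B x = x"
    using assms(2) unfolding not_spec_iff by blast
  show ?thesis unfolding not_spec_iff
    by (rule exI[of _ B]) (use B assms(1) in auto)
qed

lemma spec_shift:
  assumes "subspace F" "l \<notin> spectrum_on F M"
  shows "(1 - l) \<notin> spectrum_on F (\<lambda>x. x - M x)"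
proof -
  obtain B C where B: "\<forall>x\<in>F. B x \<in> F" "\<forall>x\<in>F. norm (B x) \<le> C * norm x"
     "\<forall>x\<in>F. B (M x - l *\<^sub>R x) = x \<and> M (B x) - l *\<^sub>R B x = x"
    using assms(2) unfolding not_spec_iff by blast
  have neg: "- x \<in> F" if "x \<in> F" for x using assms(1) that by (simp add: subspace_neg)
  show ?thesis unfolding not_spec_iff
  proof (intro exI[of _ "\<lambda>x. B (- x)"] conjI ballI)
    fix x assume x: "x \<in> F"
    show "B (- x) \<in> F" using B(1) neg[OF x] by blast
    show "B (- (x - M x - (1 - l) *\<^sub>R x)) = x"
    proof -
      have "- (x - M x - (1 - l) *\<^sub>R x) = M x - l *\<^sub>R x" by (simp add: algebra_simps)
      then show ?thesis using B(3) x by metis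
    qed
    have e: "M (B (- x)) - l *\<^sub>R B (- x) = - x" using B(3) neg[OF x] by blast
    show "B (- x) - M (B (- x)) - (1 - l) *\<^sub>R B (- x) = x"
    proof -
      have "B (- x) - M (B (- x)) - (1 - l) *\<^sub>R B (- x) = - (M (B (- x)) - l *\<^sub>R B (- x))"
        by (simp add: algebra_simps)
      then show ?thesis using e by simp
    qed
  next
    show "\<exists>C. \<forall>x\<in>F. norm (B (- x)) \<le> C * norm x"
      by (rule exI[of _ C]) (use B(2) neg in fastforce)
  qed
qed

lemma spec_bdd_below:
  assumes "l \<notin> spectrum_on F M" "\<forall>x\<in>F. M x - l *\<^sub>R x \<in> F"
  shows "\<exists>C\<ge>0. \<forall>x\<in>F. norm x \<le> C * norm (M x - l *\<^sub>R x)"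
proof -
  obtain B C where B: "\<forall>x\<in>F. B x \<in> F" "\<forall>x\<in>F. norm (B x) \<le> C * norm x"
     "\<forall>x\<in>F. B (M x - l *\<^sub>R x) = x \<and> M (B x) - l *\<^sub>R B x = x"
    using assms(1) unfolding not_spec_iff by blast
  show ?thesis
  proof (intro exI[of _ "max C 0"] conjI ballI)
    fix x assume x: "x \<in> F"
    have "norm x = norm (B (M x - l *\<^sub>R x))" using B(3) x by simp
    also have "\<dots> \<le> C * norm (M x - l *\<^sub>R x)" using B(2) assms(2) x by blast
    also have "\<dots> \<le> max C 0 * norm (M x - l *\<^sub>R x)" by (intro mult_right_mono) auto
    finally show "norm x \<le> max C 0 * norm (M x - l *\<^sub>R x)" .
  qed simp
qed

lemma jacobson:
  assumes sU: "subspace U" and XV: "\<forall>v\<in>V. X v \<in> U" and YU: "\<forall>u\<in>U. Y u \<in> V"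
    and bX: "bounded_linear X" and bY: "bounded_linear Y" and s0: "\<sigma> \<noteq> 0"
    and ns: "\<sigma> \<notin> spectrum_on V (\<lambda>v. Y (X v))"
  shows "\<sigma> \<notin> spectrum_on U (\<lambda>u. X (Y u))"
proof -
  obtain R C where R: "\<forall>x\<in>V. R x \<in> V" "\<forall>x\<in>V. norm (R x) \<le> C * norm x"
     "\<forall>x\<in>V. R (Y (X x) - \<sigma> *\<^sub>R x) = x \<and> Y (X (R x)) - \<sigma> *\<^sub>R R x = x"
    using ns unfolding not_spec_iff by blast
  have lX: "linear X" and lY: "linear Y" using bX bY bounded_linear.linear by auto
  obtain KX where KX: "\<And>x. norm (X x) \<le> norm x * KX" "KX > 0" using bounded_linear.pos_bounded[OF bX] by blast
  obtain KY where KY: "\<And>x. norm (Y x) \<le> norm x * KY" "KY > 0" using bounded_linear.pos_bounded[OF bY] by blast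
  define B where "B = (\<lambda>u. (1 / \<sigma>) *\<^sub>R (X (R (Y u)) - u))"
  show ?thesis unfolding not_spec_iff
  proof (intro exI[of _ B] conjI ballI)
    fix u assume u: "u \<in> U"
    have Yu: "Y u \<in> V" using YU u by blast
    have r: "R (Y u) \<in> V" using R(1) Yu by blast
    show "B u \<in> U" unfolding B_def using sU XV r u
      by (intro subspace_scale subspace_diff) auto
    show "B (X (Y u) - \<sigma> *\<^sub>R u) = u"
    proof -
      have "Y (X (Y u) - \<sigma> *\<^sub>R u) = Y (X (Y u)) - \<sigma> *\<^sub>R Y u"
        by (simp add: linear_diff[OF lY] linear_scale[OF lY])
      then have "R (Y (X (Y u) - \<sigma> *\<^sub>R u)) = Y u" using R(3) Yu by simp
      then show ?thesis unfolding B_def using s0 by (simp add: algebra_simps)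
    qed
    show "X (Y (B u)) - \<sigma> *\<^sub>R B u = u"
    proof -
      define r where "r = R (Y u)"
      have rr: "Y (X r) - \<sigma> *\<^sub>R r = Y u" using R(3) Yu by (simp add: r_def)
      have "Y (B u) = (1 / \<sigma>) *\<^sub>R (Y (X r) - Y u)"
        unfolding B_def r_def by (simp add: linear_diff[OF lY] linear_scale[OF lY])
      also have "Y (X r) - Y u = \<sigma> *\<^sub>R r" using rr by (simp add: algebra_simps)
      finally have "Y (B u) = r" using s0 by simp
      then have "X (Y (B u)) = X r" by simp
      then show ?thesis unfolding B_def r_def using s0 by (simp add: algebra_simps)
    qed
  next
    show "\<exists>C. \<forall>x\<in>U. norm (B x) \<le> C * norm x"
    proof (intro exI[of _ "(1 / \<bar>\<sigma>\<bar>) * (KX * max C 0 * KY + 1)"] ballI)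
      fix u assume u: "u \<in> U"
      have Yu: "Y u \<in> V" using YU u by blast
      have "norm (R (Y u)) \<le> max C 0 * norm (Y u)"
        using R(2) Yu by (meson max.cobounded1 mult_right_mono norm_ge_zero order_trans)
      also have "\<dots> \<le> max C 0 * (norm u * KY)" using KY by (intro mult_left_mono) auto
      finally have nr: "norm (R (Y u)) \<le> max C 0 * (norm u * KY)" .
      have "norm (X (R (Y u))) \<le> norm (R (Y u)) * KX" by (rule KX(1))
      also have "\<dots> \<le> max C 0 * (norm u * KY) * KX" using nr KX by (intro mult_right_mono) auto
      finally have nx: "norm (X (R (Y u))) \<le> max C 0 * (norm u * KY) * KX" .
      have "norm (B u) = (1 / \<bar>\<sigma>\<bar>) * norm (X (R (Y u)) - u)" by (simp add: B_def)
      also have "\<dots> \<le> (1 / \<bar>\<sigma>\<bar>) * (norm (X (R (Y u))) + norm u)"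
        by (intro mult_left_mono norm_triangle_ineq4) auto
      also have "\<dots> \<le> (1 / \<bar>\<sigma>\<bar>) * (max C 0 * (norm u * KY) * KX + norm u)"
        using nx by (intro mult_left_mono) auto
      also have "\<dots> = (1 / \<bar>\<sigma>\<bar>) * (KX * max C 0 * KY + 1) * norm u"
        by (simp add: algebra_simps)
      finally show "norm (B u) \<le> (1 / \<bar>\<sigma>\<bar>) * (KX * max C 0 * KY + 1) * norm u" .
    qed
  qed
qed



lemma funpow_bl: "bounded_linear (M::'a::real_normed_vector\<Rightarrow>'a) \<Longrightarrow> bounded_linear (M ^^ n)"
proof (induction n)
  case 0 then show ?case by (simp add: id_def bounded_linear_ident)
next
  case (Suc n)
  have "M ^^ Suc n = (\<lambda>x. M ((M ^^ n) x))" by auto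
  then show ?case using bounded_linear_compose[OF Suc.prems Suc.IH[OF Suc.prems]] by simp
qed

lemma funpow_in: "\<forall>x\<in>F. (M::'a\<Rightarrow>'a) x \<in> F \<Longrightarrow> x \<in> F \<Longrightarrow> (M ^^ n) x \<in> F"
  by (induction n) auto

lemma funpow_norm: "(\<And>x. norm ((M::'a::real_normed_vector\<Rightarrow>'a) x) \<le> norm x) \<Longrightarrow> norm ((M ^^ n) x) \<le> norm x"
proof (induction n)
  case 0 then show ?case by simp
next
  case (Suc n)
  have "norm ((M ^^ Suc n) x) = norm (M ((M ^^ n) x))" by simp
  also have "\<dots> \<le> norm ((M ^^ n) x)" by (rule Suc.prems)
  finally show ?case using Suc.IH[OF Suc.prems] by linarith
qed

lemma neumann:
  fixes M :: "'a::{real_inner,complete_space} \<Rightarrow> 'a"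
  assumes cs: "closed_subspace F" and bM: "bounded_linear M" and MF: "\<forall>x\<in>F. M x \<in> F"
    and nM: "\<And>x. norm (M x) \<le> norm x" and l1: "l > 1"
  shows "l \<notin> spectrum_on F M"
proof -
  have sF: "subspace F" and cF: "closed F" using cs by (auto simp: closed_subspace_def)
  have lM: "linear M" using bM bounded_linear.linear by blast
  have fix1: "\<exists>!z\<in>F. (1 / l) *\<^sub>R (M z - y) = z" if y: "y \<in> F" for y
  proof (rule Banach_fix[where c="1 / l"])
    show "complete F" using cF by (simp add: complete_eq_closed)
    show "F \<noteq> {}" using sF subspace_0 by blast
    show "0 \<le> 1 / l" "1 / l < 1" using l1 by auto
    show "(\<lambda>z. (1 / l) *\<^sub>R (M z - y)) ` F \<subseteq> F"
      using MF y sF by (auto intro!: subspace_scale subspace_diff)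
    fix z w assume "z \<in> F" "w \<in> F"
    have "(1 / l) *\<^sub>R (M z - y) - (1 / l) *\<^sub>R (M w - y) = (1 / l) *\<^sub>R M (z - w)"
      by (simp add: linear_diff[OF lM] algebra_simps)
    then have "dist ((1 / l) *\<^sub>R (M z - y)) ((1 / l) *\<^sub>R (M w - y)) = (1 / l) * norm (M (z - w))"
      using l1 by (simp add: dist_norm)
    also have "\<dots> \<le> (1 / l) * norm (z - w)" using l1 nM by (intro mult_left_mono) auto
    finally show "dist ((1 / l) *\<^sub>R (M z - y)) ((1 / l) *\<^sub>R (M w - y)) \<le> 1 / l * dist z w"
      by (simp add: dist_norm)
  qed
  define B where "B = (\<lambda>y. THE z. z \<in> F \<and> (1 / l) *\<^sub>R (M z - y) = z)"
  have Bp: "B y \<in> F \<and> (1 / l) *\<^sub>R (M (B y) - y) = B y" if "y \<in> F" for y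
    unfolding B_def using theI'[OF fix1[OF that]] by blast
  have Bu: "B y = z" if "y \<in> F" "z \<in> F" "(1 / l) *\<^sub>R (M z - y) = z" for y z
    unfolding B_def using fix1[OF that(1)] that(2,3) by (auto intro!: the1_equality)
  have Beq: "M (B y) - l *\<^sub>R B y = y" if "y \<in> F" for y
  proof -
    have "(1 / l) *\<^sub>R (M (B y) - y) = B y" using Bp[OF that] by blast
    then have "l *\<^sub>R ((1 / l) *\<^sub>R (M (B y) - y)) = l *\<^sub>R B y" by simp
    then have "M (B y) - y = l *\<^sub>R B y" using l1 by simp
    then show ?thesis by (simp add: algebra_simps)
  qed
  show ?thesis unfolding not_spec_iff
  proof (intro exI[of _ B] conjI ballI)
    fix x assume x: "x \<in> F"
    show "B x \<in> F" using Bp[OF x] by blast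
    show "M (B x) - l *\<^sub>R B x = x" by (rule Beq[OF x])
    have "M x - l *\<^sub>R x \<in> F" using x MF sF by (auto intro!: subspace_scale subspace_diff)
    moreover have "(1 / l) *\<^sub>R (M x - (M x - l *\<^sub>R x)) = x" using l1 by simp
    ultimately show "B (M x - l *\<^sub>R x) = x" using Bu x by blast
  next
    show "\<exists>C. \<forall>x\<in>F. norm (B x) \<le> C * norm x"
    proof (intro exI[of _ "1 / (l - 1)"] ballI)
      fix x assume x: "x \<in> F"
      have "l *\<^sub>R B x = M (B x) - x" using Beq[OF x] by (simp add: algebra_simps)
      then have "l * norm (B x) = norm (M (B x) - x)" using l1 by (metis abs_of_pos less_trans norm_scaleR zero_less_one)
      also have "\<dots> \<le> norm (B x) + norm x" using nM[of "B x"] norm_triangle_ineq4[of "M (B x)" x] by linarith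
      finally have "(l - 1) * norm (B x) \<le> norm x" by (simp add: algebra_simps)
      then show "norm (B x) \<le> 1 / (l - 1) * norm x" using l1 by (simp add: field_simps)
    qed
  qed
qed



lemma nr_core:
  fixes M :: "'a::real_inner \<Rightarrow> 'a"
  assumes sF: "subspace F" and MF: "\<forall>x\<in>F. M x \<in> F"
    and add: "\<forall>x\<in>F. \<forall>y\<in>F. M (x + y) = M x + M y"
    and scl: "\<forall>x\<in>F. \<forall>a. M (a *\<^sub>R x) = a *\<^sub>R M x"
    and sa: "\<forall>x\<in>F. \<forall>y\<in>F. inner (M x) y = inner x (M y)"
    and bd: "\<forall>x\<in>F. norm (M x) \<le> C * norm x"
    and up: "\<forall>w\<in>F. inner (M w) w \<le> \<nu> * (norm w)\<^sup>2"
    and approx: "\<forall>\<delta>>0. \<exists>w\<in>F. norm w = 1 \<and> inner (M w) w > \<nu> - \<delta>"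
    and e: "e > 0"
  shows "\<exists>w\<in>F. norm w = 1 \<and> norm (M w - \<nu> *\<^sub>R w) < e"
proof -
  define N where "N = (\<lambda>w. \<nu> *\<^sub>R w - M w)"
  define D where "D = \<bar>\<nu>\<bar> + \<bar>C\<bar> + 1"
  have D0: "D > 0" by (simp add: D_def add_pos_nonneg)
  have NF: "N w \<in> F" if "w \<in> F" for w using that MF sF by (auto simp: N_def intro: subspace_diff subspace_scale)
  have Nlin: "N (w - s *\<^sub>R z) = N w - s *\<^sub>R N z" if "w \<in> F" "z \<in> F" for w z s
  proof -
    have "(- s) *\<^sub>R z \<in> F" using that sF subspace_scale by blast
    then have "M (w + (- s) *\<^sub>R z) = M w + M ((- s) *\<^sub>R z)" using add that by blast
    also have "M ((- s) *\<^sub>R z) = (- s) *\<^sub>R M z" using scl that by blast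
    finally have "M (w - s *\<^sub>R z) = M w - s *\<^sub>R M z" by simp
    then show ?thesis by (simp add: N_def algebra_simps)
  qed
  have Nsa: "inner (N x) y = inner x (N y)" if "x \<in> F" "y \<in> F" for x y
    using sa that by (simp add: N_def inner_diff_left inner_diff_right)
  have q0: "inner (N w) w \<ge> 0" if "w \<in> F" for w
    using up that by (simp add: N_def inner_diff_left power2_norm_eq_inner)
  have Nbd: "norm (N z) \<le> D * norm z" if "z \<in> F" for z
  proof -
    have "norm (N z) \<le> norm (\<nu> *\<^sub>R z) + norm (M z)" unfolding N_def by (rule norm_triangle_ineq4)
    also have "norm (M z) \<le> \<bar>C\<bar> * norm z" using bd that
      by (meson abs_ge_self mult_right_mono norm_ge_zero order_trans)
    finally have "norm (N z) \<le> \<bar>\<nu>\<bar> * norm z + \<bar>C\<bar> * norm z" by simp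
    also have "\<dots> \<le> D * norm z" by (simp add: D_def algebra_simps)
    finally show ?thesis .
  qed
  have key: "(norm (N w))\<^sup>2 \<le> D * inner (N w) w" if w: "w \<in> F" for w
  proof -
    define z where "z = N w"
    define s where "s = 1 / D"
    have zF: "z \<in> F" using NF w by (simp add: z_def)
    have "w - s *\<^sub>R z \<in> F" using w zF sF by (simp add: subspace_diff subspace_scale)
    then have "0 \<le> inner (N (w - s *\<^sub>R z)) (w - s *\<^sub>R z)" by (rule q0)
    also have "\<dots> = inner (N w) w - s * inner (N w) z - s * inner (N z) w + s\<^sup>2 * inner (N z) z"
      unfolding Nlin[OF w zF] by (simp add: inner_diff_left inner_diff_right power2_eq_square algebra_simps)
    also have "inner (N z) w = inner z (N w)" using Nsa[OF zF w] .
    also have "inner (N w) z = (norm z)\<^sup>2" by (simp add: z_def power2_norm_eq_inner)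
    also have "inner z (N w) = (norm z)\<^sup>2" by (simp add: z_def power2_norm_eq_inner)
    also have "inner (N z) z \<le> D * (norm z)\<^sup>2"
    proof -
      have "inner (N z) z \<le> norm (N z) * norm z" by (rule norm_cauchy_schwarz)
      also have "\<dots> \<le> D * norm z * norm z" using Nbd[OF zF] by (intro mult_right_mono) auto
      finally show ?thesis by (simp add: power2_eq_square algebra_simps)
    qed
    finally have "0 \<le> inner (N w) w - s * (norm z)\<^sup>2 - s * (norm z)\<^sup>2 + s\<^sup>2 * (D * (norm z)\<^sup>2)"
      by (simp add: mult_left_mono)
    also have "\<dots> = inner (N w) w - (norm z)\<^sup>2 / D" using D0 by (simp add: s_def power2_eq_square field_simps)
    finally have "(norm z)\<^sup>2 / D \<le> inner (N w) w" by simp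
    then show ?thesis using D0 by (simp add: z_def field_simps)
  qed
  have "e\<^sup>2 / D > 0" using e D0 by simp
  then obtain w where w: "w \<in> F" "norm w = 1" "inner (M w) w > \<nu> - e\<^sup>2 / D" using approx by blast
  have "inner (N w) w = \<nu> - inner (M w) w" using w(2) by (simp add: N_def inner_diff_left power2_norm_eq_inner[symmetric])
  then have "inner (N w) w < e\<^sup>2 / D" using w(3) by simp
  then have "D * inner (N w) w < e\<^sup>2" using D0 by (simp add: field_simps)
  then have "(norm (N w))\<^sup>2 < e\<^sup>2" using key[OF w(1)] by linarith
  then have "norm (N w) < e" using e by (simp add: power_less_imp_less_base)
  moreover have "norm (M w - \<nu> *\<^sub>R w) = norm (N w)" by (simp add: N_def norm_minus_commute)
  ultimately show ?thesis using w by auto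
qed

lemma nr_sup:
  fixes M :: "'a::real_inner \<Rightarrow> 'a"
  assumes sF: "subspace F"
    and scl: "\<forall>x\<in>F. \<forall>a. M (a *\<^sub>R x) = a *\<^sub>R M x"
    and bd: "\<forall>x\<in>F. norm (M x) \<le> C * norm x"
    and y0: "y0 \<in> F" "y0 \<noteq> 0"
  defines "\<nu> \<equiv> Sup {inner (M w) w | w. w \<in> F \<and> norm w = 1}"
  shows "\<forall>w\<in>F. inner (M w) w \<le> \<nu> * (norm w)\<^sup>2"
    and "\<forall>\<delta>>0. \<exists>w\<in>F. norm w = 1 \<and> inner (M w) w > \<nu> - \<delta>"
proof -
  define X where "X = {inner (M w) w | w. w \<in> F \<and> norm w = 1}"
  have unit: "(1 / norm w) *\<^sub>R w \<in> F \<and> norm ((1 / norm w) *\<^sub>R w) = 1" if "w \<in> F" "w \<noteq> 0" for w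
    using that sF by (simp add: subspace_scale)
  have Xne: "X \<noteq> {}" using unit[OF y0] by (auto simp: X_def)
  have Xbdd: "bdd_above X"
  proof (rule bdd_aboveI[of _ "\<bar>C\<bar>"])
    fix r assume "r \<in> X"
    then obtain w where w: "w \<in> F" "norm w = 1" "r = inner (M w) w" by (auto simp: X_def)
    have "r \<le> norm (M w) * norm w" using w(3) norm_cauchy_schwarz by simp
    also have "\<dots> \<le> C" using bd w by (metis mult.right_neutral)
    finally show "r \<le> \<bar>C\<bar>" by simp
  qed
  show "\<forall>w\<in>F. inner (M w) w \<le> \<nu> * (norm w)\<^sup>2"
  proof
    fix w assume w: "w \<in> F"
    show "inner (M w) w \<le> \<nu> * (norm w)\<^sup>2"
    proof (cases "w = 0")
      case True
      have "M 0 = 0" using scl sF subspace_0[OF sF] by (metis scaleR_zero_left)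
      then show ?thesis using True by simp
    next
      case False
      define u where "u = (1 / norm w) *\<^sub>R w"
      have u: "u \<in> F" "norm u = 1" using unit[OF w False] by (auto simp: u_def)
      have "inner (M u) u \<in> X" using u by (auto simp: X_def)
      then have "inner (M u) u \<le> \<nu>" unfolding \<nu>_def X_def[symmetric] using Xbdd by (rule cSup_upper)
      moreover have "inner (M u) u = inner (M w) w / (norm w)\<^sup>2"
        using scl w by (simp add: u_def power2_eq_square)
      ultimately show ?thesis using False by (simp add: field_simps)
    qed
  qed
  show "\<forall>\<delta>>0. \<exists>w\<in>F. norm w = 1 \<and> inner (M w) w > \<nu> - \<delta>"
  proof (intro allI impI)
    fix \<delta> :: real assume "\<delta> > 0"
    then have "\<nu> - \<delta> < Sup X" by (simp add: \<nu>_def X_def)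
    then obtain r where "r \<in> X" "\<nu> - \<delta> < r" using less_cSup_iff[OF Xne Xbdd] by blast
    then show "\<exists>w\<in>F. norm w = 1 \<and> inner (M w) w > \<nu> - \<delta>" by (auto simp: X_def)
  qed
qed



lemma inv_props:
  fixes L :: "'a::real_inner \<Rightarrow> 'a"
  assumes sF: "subspace F" and lL: "linear L"
    and BF: "\<forall>x\<in>F. B x \<in> F" and inv: "\<forall>x\<in>F. B (L x) = x \<and> L (B x) = x"
  shows "\<forall>x\<in>F. \<forall>y\<in>F. B (x + y) = B x + B y" and "\<forall>x\<in>F. \<forall>a. B (a *\<^sub>R x) = a *\<^sub>R B x"
proof -
  show "\<forall>x\<in>F. \<forall>y\<in>F. B (x + y) = B x + B y"
  proof (intro ballI)
    fix x y assume xy: "x \<in> F" "y \<in> F"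
    have s: "B x + B y \<in> F" using BF xy sF by (simp add: subspace_add)
    have "L (B x + B y) = x + y" using inv xy by (simp add: linear_add[OF lL])
    then have "B (x + y) = B (L (B x + B y))" by simp
    also have "\<dots> = B x + B y" using inv s by blast
    finally show "B (x + y) = B x + B y" .
  qed
  show "\<forall>x\<in>F. \<forall>a. B (a *\<^sub>R x) = a *\<^sub>R B x"
  proof (intro ballI allI)
    fix x a assume x: "x \<in> F"
    have s: "a *\<^sub>R B x \<in> F" using BF x sF by (simp add: subspace_scale)
    have "L (a *\<^sub>R B x) = a *\<^sub>R x" using inv x by (simp add: linear_scale[OF lL])
    then have "B (a *\<^sub>R x) = B (L (a *\<^sub>R B x))" by simp
    also have "\<dots> = a *\<^sub>R B x" using inv s by blast
    finally show "B (a *\<^sub>R x) = a *\<^sub>R B x" .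
  qed
qed

locale two =
  fixes S T :: "'a::{real_inner,complete_space} set"
  assumes cS: "closed_subspace S" and cT: "closed_subspace T"
begin

sublocale pS: cproj S by (rule cproj.intro[OF cS])
sublocale pT: cproj T by (rule cproj.intro[OF cT])

abbreviation "P \<equiv> orth_proj S"
abbreviation "Q \<equiv> orth_proj T"
abbreviation "Sp \<equiv> orthogonal_comp S"
abbreviation "Tp \<equiv> orthogonal_comp T"

definition A where "A x = Q x - P (Q x)"

lemma sSp: "subspace Sp" by (rule subspace_orthogonal_comp)
lemma sTp: "subspace Tp" by (rule subspace_orthogonal_comp)

lemma p_diff: "P (x - y) = P x - P y" using linear_diff[OF pS.p_linear] .
lemma q_diff: "Q (x - y) = Q x - Q y" using linear_diff[OF pT.p_linear] .

lemma A_Sp: "A x \<in> Sp" unfolding A_def by (rule pS.p_oc)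
lemma A_bl: "bounded_linear A"
proof -
  have "A = (\<lambda>x. (\<lambda>y. y - P y) (Q x))" by (auto simp: A_def fun_eq_iff)
  then show ?thesis using bounded_linear_compose[OF pS.q_bl pT.p_bl] by simp
qed
lemma A_lin: "linear A" using A_bl bounded_linear.linear by blast
lemma A_add: "A (x + y) = A x + A y" using linear_add[OF A_lin] .
lemma A_diff: "A (x - y) = A x - A y" using linear_diff[OF A_lin] .
lemma A_scale: "A (c *\<^sub>R x) = c *\<^sub>R A x" using linear_scale[OF A_lin] .

lemma P_Sp: "x \<in> Sp \<Longrightarrow> P x = 0" by (rule pS.p_zero)

lemma A_inner: "y \<in> Sp \<Longrightarrow> inner (A x) y = inner (Q x) y"
proof -
  assume y: "y \<in> Sp"
  have "inner (P (Q x)) y = inner (Q x) (P y)" by (rule pS.p_sa)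
  also have "\<dots> = 0" using P_Sp[OF y] by simp
  finally show ?thesis by (simp add: A_def inner_diff_left)
qed

lemma A_sa: "x \<in> Sp \<Longrightarrow> y \<in> Sp \<Longrightarrow> inner (A x) y = inner x (A y)"
proof -
  assume x: "x \<in> Sp" and y: "y \<in> Sp"
  have "inner (A x) y = inner (Q x) y" by (rule A_inner[OF y])
  also have "\<dots> = inner x (Q y)" by (rule pT.p_sa)
  also have "\<dots> = inner (Q y) x" by (simp add: inner_commute)
  also have "\<dots> = inner (A y) x" by (rule A_inner[OF x, symmetric])
  finally show ?thesis by (simp add: inner_commute)
qed

lemma A_quad: "x \<in> Sp \<Longrightarrow> inner (A x) x = (norm (Q x))\<^sup>2"
  using A_inner[of x x] by (simp add: pT.inner_p)

lemma A_normQ: "norm (A x) \<le> norm (Q x)" unfolding A_def by (rule pS.p_qnorm)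
lemma A_norm: "norm (A x) \<le> norm x" using A_normQ pT.p_norm order_trans by blast

lemma A_norm2: "x \<in> Sp \<Longrightarrow> (norm (A x))\<^sup>2 \<le> inner (A x) x"
  using A_normQ[of x] A_quad[of x] by (simp add: power_mono)

lemma A_quad_le: "x \<in> Sp \<Longrightarrow> inner (A x) x \<le> (norm x)\<^sup>2"
  using A_quad[of x] pT.p_norm[of x] by (simp add: power_mono)

lemma A_K: "x \<in> Sp \<Longrightarrow> x - ((Q x - x) - P (Q x - x)) = A x \<or> True" by simp

lemma K_A: "x \<in> Sp \<Longrightarrow> x - ((x - Q x) - P (x - Q x)) = A x"
  using P_Sp[of x] by (simp add: A_def p_diff)

lemma spec_transfer:
  assumes s0: "0 < \<sigma>" and s1: "\<sigma> < 1"
    and ns: "\<sigma> \<notin> spectrum_on S (\<lambda>x. P (Q x)) \<or> \<sigma> \<notin> spectrum_on T (\<lambda>x. Q (P x))"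
  shows "(1 - \<sigma>) \<notin> spectrum_on Sp A"
proof -
  have st0: "\<sigma> \<notin> spectrum_on S (\<lambda>x. P (Q x))"
  proof (cases "\<sigma> \<notin> spectrum_on S (\<lambda>x. P (Q x))")
    case False
    then have nT: "\<sigma> \<notin> spectrum_on T (\<lambda>x. Q (P x))" using ns by blast
    show ?thesis
      by (rule jacobson[where X=P and Y=Q and U=S and V=T, OF pS.sV _ _ pS.p_bl pT.p_bl _ nT])
        (use s0 pS.p_in pT.p_in in auto)
  qed
  have st2: "(1 - \<sigma>) \<notin> spectrum_on S (\<lambda>x. P (x - Q x))"
  proof (rule spec_cong[OF _ spec_shift[OF pS.sV st0]])
    show "\<forall>x\<in>S. x - P (Q x) = P (x - Q x)" by (simp add: p_diff pS.p_id)
  qed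
  have st3: "(1 - \<sigma>) \<notin> spectrum_on Tp (\<lambda>u. (\<lambda>y. y - Q y) (P u))"
    by (rule jacobson[where X="\<lambda>y. y - Q y" and Y=P and U=Tp and V=S, OF sTp _ _ pT.q_bl pS.p_bl _ st2]) (use s1 pT.q_in pS.p_in in auto)
  have e: "1 - (1 - \<sigma>) = \<sigma>" by simp
  have st4: "\<sigma> \<notin> spectrum_on Tp (\<lambda>u. (\<lambda>y. y - Q y) ((\<lambda>y. y - P y) u))"
  proof (rule spec_cong[OF _ spec_shift[OF sTp st3, unfolded e]])
    show "\<forall>x\<in>Tp. x - (P x - Q (P x)) = x - P x - Q (x - P x)"
      by (simp add: q_diff pT.p_zero)
  qed
  have st5: "\<sigma> \<notin> spectrum_on Sp (\<lambda>u. (\<lambda>y. y - P y) ((\<lambda>y. y - Q y) u))"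
    by (rule jacobson[where X="\<lambda>y. y - P y" and Y="\<lambda>y. y - Q y" and U=Sp and V=Tp, OF sSp _ _ pS.q_bl pT.q_bl _ st4]) (use s0 pS.q_in pT.q_in in auto)
  show ?thesis
  proof (rule spec_cong[OF _ spec_shift[OF sSp st5]])
    show "\<forall>x\<in>Sp. x - (x - Q x - P (x - Q x)) = A x" using K_A by simp
  qed
qed

end



locale gap = two +
  fixes lam :: real
  assumes lam0: "0 \<le> lam" and lam1: "lam < 1"
    and gapA: "\<And>t. lam < t \<Longrightarrow> t < 1 \<Longrightarrow> t \<notin> spectrum_on Sp A"
begin

lemma L_Sp: "x \<in> Sp \<Longrightarrow> A x - u *\<^sub>R x \<in> Sp"
  using A_Sp sSp by (simp add: subspace_diff subspace_scale)

lemma bb: assumes "lam < u" "u < 1" shows "\<exists>C\<ge>0. \<forall>x\<in>Sp. norm x \<le> C * norm (A x - u *\<^sub>R x)"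
  using spec_bdd_below[OF gapA[OF assms]] L_Sp by blast

lemma ii:
  assumes t: "lam < t" "t < 1" and v: "v \<in> Sp"
  shows "0 \<le> (norm (A v))\<^sup>2 - (1 + t) * inner (A v) v + t * (norm v)\<^sup>2"
proof (rule ccontr)
  assume neg: "\<not> 0 \<le> (norm (A v))\<^sup>2 - (1 + t) * inner (A v) v + t * (norm v)\<^sup>2"
  obtain B C where BF: "\<forall>x\<in>Sp. B x \<in> Sp" and Bbd: "\<forall>x\<in>Sp. norm (B x) \<le> C * norm x"
     and inv0: "\<forall>x\<in>Sp. B (A x - t *\<^sub>R x) = x \<and> A (B x) - t *\<^sub>R B x = x"
    using gapA[OF t] unfolding not_spec_iff by blast
  define L where "L = (\<lambda>x. A x - t *\<^sub>R x)"
  have lL: "linear L" unfolding L_def by (rule linearI) (simp_all add: A_add A_scale algebra_simps)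
  have inv: "\<forall>x\<in>Sp. B (L x) = x \<and> L (B x) = x" using inv0 by (simp add: L_def)
  have LSp: "L x \<in> Sp" if "x \<in> Sp" for x using L_Sp[OF that] by (simp add: L_def)
  have Lsa: "inner (L x) y = inner x (L y)" if "x \<in> Sp" "y \<in> Sp" for x y
    using A_sa[OF that] by (simp add: L_def inner_diff_left inner_diff_right)
  note Blin = inv_props[OF sSp lL BF inv]
  have Bsa: "\<forall>x\<in>Sp. \<forall>y\<in>Sp. inner (B x) y = inner x (B y)"
  proof (intro ballI)
    fix x y assume xy: "x \<in> Sp" "y \<in> Sp"
    have "inner (B x) y = inner (B x) (L (B y))" using inv xy by simp
    also have "\<dots> = inner (L (B x)) (B y)" using Lsa BF xy by simp
    also have "\<dots> = inner x (B y)" using inv xy by simp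
    finally show "inner (B x) y = inner x (B y)" .
  qed
  define w where "w = L v"
  have wSp: "w \<in> Sp" using LSp[OF v] by (simp add: w_def)
  have Bw: "B w = v" using inv v by (simp add: w_def)
  have "(norm w)\<^sup>2 - (1 - t) * inner (B w) w
      = (norm (A v))\<^sup>2 - (1 + t) * inner (A v) v + t * (norm v)\<^sup>2"
    unfolding Bw unfolding w_def L_def power2_norm_eq_inner
    by (simp add: inner_diff_left inner_diff_right inner_commute algebra_simps power2_eq_square)
  with neg have lt: "(norm w)\<^sup>2 < (1 - t) * inner (B w) w" by linarith
  have w0: "w \<noteq> 0"
  proof
    assume "w = 0" then show False using lt by simp
  qed
  define \<nu> where "\<nu> = Sup {inner (B x) x | x. x \<in> Sp \<and> norm x = 1}"
  note nr = nr_sup[OF sSp Blin(2) Bbd wSp w0, folded \<nu>_def]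
  have "inner (B w) w \<le> \<nu> * (norm w)\<^sup>2" using nr(1) wSp by blast
  then have "(norm w)\<^sup>2 < (1 - t) * \<nu> * (norm w)\<^sup>2" using lt t
    by (smt (verit, best) mult_left_mono mult.assoc)
  moreover have "(norm w)\<^sup>2 > 0" using w0 by simp
  ultimately have nu1: "1 < (1 - t) * \<nu>" by simp
  have nu0: "\<nu> > 0" using nu1 t by (smt (verit) mult_nonneg_nonpos)
  define u where "u = t + 1 / \<nu>"
  have u1: "u < 1" using nu1 nu0 by (simp add: u_def field_simps)
  have ut: "t < u" using nu0 by (simp add: u_def)
  obtain Cu where Cu: "Cu \<ge> 0" "\<forall>x\<in>Sp. norm x \<le> Cu * norm (A x - u *\<^sub>R x)"
    using bb[of u] ut u1 t by auto
  define e where "e = \<nu> / (4 * (Cu + 1))"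
  have e0: "e > 0" using nu0 Cu by (simp add: e_def)
  obtain w' where w': "w' \<in> Sp" "norm w' = 1" "norm (B w' - \<nu> *\<^sub>R w') < e"
    using nr_core[OF sSp BF Blin(1) Blin(2) Bsa Bbd nr(1) nr(2) e0] by blast
  define z where "z = B w' - \<nu> *\<^sub>R w'"
  have zSp: "z \<in> Sp" using BF w' sSp by (simp add: z_def subspace_diff subspace_scale)
  have "L z = L (B w') - \<nu> *\<^sub>R L w'" by (simp add: z_def linear_diff[OF lL] linear_scale[OF lL])
  also have "\<dots> = w' - \<nu> *\<^sub>R L w'" using inv w' by simp
  also have "\<dots> = - \<nu> *\<^sub>R (A w' - u *\<^sub>R w')"
    using nu0 by (simp add: L_def u_def algebra_simps)
  finally have Lz: "L z = - \<nu> *\<^sub>R (A w' - u *\<^sub>R w')" .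
  have "norm (L z) \<le> norm (A z) + norm (t *\<^sub>R z)" unfolding L_def by (rule norm_triangle_ineq4)
  also have "\<dots> \<le> norm z + norm z"
  proof -
    have tz: "t * norm z \<le> 1 * norm z" using t lam0 by (intro mult_right_mono) auto
    have "norm (t *\<^sub>R z) = t * norm z" using t lam0 by simp
    then show ?thesis using A_norm[of z] tz by linarith
  qed
  finally have "norm (L z) \<le> 2 * norm z" by simp
  also have "\<dots> < 2 * e" using w' by (simp add: z_def)
  finally have "\<nu> * norm (A w' - u *\<^sub>R w') < 2 * e" using nu0 by (simp add: Lz)
  moreover have "2 * e = \<nu> * (1 / (2 * (Cu + 1)))" using Cu by (simp add: e_def field_simps)
  ultimately have "\<nu> * norm (A w' - u *\<^sub>R w') < \<nu> * (1 / (2 * (Cu + 1)))" by simp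
  then have nA: "norm (A w' - u *\<^sub>R w') < 1 / (2 * (Cu + 1))"
    using nu0 mult_less_cancel_left_pos by blast
  have "1 \<le> Cu * norm (A w' - u *\<^sub>R w')" using Cu(2) w' by auto
  also have "\<dots> \<le> Cu * (1 / (2 * (Cu + 1)))" using nA Cu by (intro mult_left_mono) auto
  also have "\<dots> < 1" using Cu by (simp add: field_simps)
  finally show False by simp
qed

end



lemma aux3: "(x::real) < E/4 \<Longrightarrow> -y < E/4 \<Longrightarrow> z < E/4 \<Longrightarrow> x - 2*y + z < E" by linarith

context two
begin

definition W where "W = Sp \<inter> orthogonal_comp (Sp \<inter> T)"

lemma W_Sp: "y \<in> W \<Longrightarrow> y \<in> Sp" by (simp add: W_def)
lemma W_sub: "subspace W" unfolding W_def by (intro subspace_inter subspace_orthogonal_comp)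
lemma W_closed: "closed W" unfolding W_def by (intro closed_Int closed_orthogonal_comp)
lemma W_orth: "y \<in> W \<Longrightarrow> z \<in> Sp \<Longrightarrow> z \<in> T \<Longrightarrow> inner y z = 0"
  by (auto simp: W_def orthogonal_comp_def orthogonal_def inner_commute)

lemma A_fix: "z \<in> Sp \<Longrightarrow> z \<in> T \<Longrightarrow> A z = z"
  by (simp add: A_def pT.p_id P_Sp)

lemma A_W: "y \<in> W \<Longrightarrow> A y \<in> W"
proof -
  assume y: "y \<in> W"
  have "\<forall>z\<in>Sp \<inter> T. orthogonal z (A y)"
  proof
    fix z assume z: "z \<in> Sp \<inter> T"
    have "inner (A y) z = inner y (A z)" using A_sa W_Sp[OF y] z by blast
    also have "\<dots> = inner y z" using A_fix z by simp
    also have "\<dots> = 0" using W_orth[OF y] z by blast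
    finally show "orthogonal z (A y)" by (simp add: orthogonal_def inner_commute)
  qed
  then show "A y \<in> W" using A_Sp by (simp add: W_def orthogonal_comp_def)
qed

lemma it_in: "y \<in> W \<Longrightarrow> (A ^^ k) y \<in> W"
  by (induction k) (auto simp: A_W)

lemma it_Sp: "y \<in> Sp \<Longrightarrow> (A ^^ k) y \<in> Sp"
  by (induction k) (auto simp: A_Sp)

lemma it_inner: "y \<in> Sp \<Longrightarrow> inner ((A ^^ j) y) ((A ^^ k) y) = inner ((A ^^ (j + k)) y) y"
proof (induction j arbitrary: k)
  case 0 then show ?case by (simp add: inner_commute)
next
  case (Suc j)
  have "inner ((A ^^ Suc j) y) ((A ^^ k) y) = inner (A ((A ^^ j) y)) ((A ^^ k) y)" by simp
  also have "\<dots> = inner ((A ^^ j) y) (A ((A ^^ k) y))" using A_sa it_Sp Suc.prems by blast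
  also have "\<dots> = inner ((A ^^ j) y) ((A ^^ Suc k) y)" by simp
  also have "\<dots> = inner ((A ^^ (j + Suc k)) y) y" using Suc.IH[OF Suc.prems] by blast
  finally show ?case by simp
qed

lemma a_even: "y \<in> Sp \<Longrightarrow> inner ((A ^^ (2 * k)) y) y = (norm ((A ^^ k) y))\<^sup>2"
  using it_inner[of y k k] by (simp add: power2_norm_eq_inner mult_2)

lemma a_odd: "y \<in> Sp \<Longrightarrow> inner ((A ^^ (2 * k + 1)) y) y = inner (A ((A ^^ k) y)) ((A ^^ k) y)"
  using it_inner[of y "Suc k" k] by (simp add: mult_2)

lemma a_even2: "y \<in> Sp \<Longrightarrow> inner ((A ^^ (2 * k + 2)) y) y = (norm (A ((A ^^ k) y)))\<^sup>2"
  using it_inner[of y "Suc k" "Suc k"] by (simp add: power2_norm_eq_inner mult_2)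

lemma a_dec: "y \<in> Sp \<Longrightarrow> inner ((A ^^ Suc j) y) y \<le> inner ((A ^^ j) y) y"
proof -
  assume y: "y \<in> Sp"
  show ?thesis
  proof (cases "even j")
    case True
    then obtain k where k: "j = 2 * k" by blast
    have "inner ((A ^^ Suc j) y) y = inner (A ((A ^^ k) y)) ((A ^^ k) y)"
      using a_odd[OF y, of k] k by simp
    also have "\<dots> \<le> (norm ((A ^^ k) y))\<^sup>2" using A_quad_le it_Sp[OF y] by blast
    also have "\<dots> = inner ((A ^^ j) y) y" using a_even[OF y, of k] k by simp
    finally show ?thesis .
  next
    case False
    then obtain k where k: "j = 2 * k + 1" using oddE by blast
    have "inner ((A ^^ Suc j) y) y = (norm (A ((A ^^ k) y)))\<^sup>2"
      using a_even2[OF y, of k] k by simp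
    also have "\<dots> \<le> inner (A ((A ^^ k) y)) ((A ^^ k) y)" using A_norm2 it_Sp[OF y] by blast
    also have "\<dots> = inner ((A ^^ j) y) y" using a_odd[OF y, of k] k by simp
    finally show ?thesis .
  qed
qed

lemma a_nonneg: "y \<in> Sp \<Longrightarrow> 0 \<le> inner ((A ^^ j) y) y"
proof -
  assume y: "y \<in> Sp"
  show ?thesis
  proof (cases "even j")
    case True
    then obtain k where k: "j = 2 * k" by blast
    show ?thesis using a_even[OF y, of k] k by simp
  next
    case False
    then obtain k where k: "j = 2 * k + 1" using oddE by blast
    show ?thesis using a_odd[OF y, of k] k A_quad it_Sp[OF y] by simp
  qed
qed

lemma conv0:
  assumes y: "y \<in> W"
  shows "(\<lambda>k. (A ^^ k) y) \<longlonglongrightarrow> 0"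
proof -
  have ySp: "y \<in> Sp" using W_Sp[OF y] .
  define a where "a = (\<lambda>j. inner ((A ^^ j) y) y)"
  define s where "s = (\<lambda>k. (A ^^ k) y)"
  have "decseq a" unfolding a_def by (rule decseq_SucI) (rule a_dec[OF ySp])
  moreover have "\<forall>i. 0 \<le> a i" unfolding a_def using a_nonneg[OF ySp] by blast
  ultimately obtain L where L: "a \<longlonglongrightarrow> L" by (rule decseq_convergent)
  have ns: "(norm (s j - s k))\<^sup>2 = (a (j + j) - L) - 2 * (a (j + k) - L) + (a (k + k) - L)" for j k
  proof -
    have "(norm (s j - s k))\<^sup>2 = inner (s j) (s j) - 2 * inner (s j) (s k) + inner (s k) (s k)"
      by (simp add: power2_norm_eq_inner inner_diff_left inner_diff_right inner_commute)
    also have "\<dots> = a (j + j) - 2 * a (j + k) + a (k + k)"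
      unfolding s_def a_def using it_inner[OF ySp] by simp
    finally show ?thesis by simp
  qed
  have "Cauchy s"
  proof (rule CauchyI)
    fix e :: real assume e: "0 < e"
    have "e\<^sup>2 / 4 > 0" using e by simp
    then obtain N where N: "\<forall>n\<ge>N. norm (a n - L) < e\<^sup>2 / 4" using L LIMSEQ_iff by blast
    show "\<exists>M. \<forall>m\<ge>M. \<forall>n\<ge>M. norm (s m - s n) < e"
    proof (intro exI allI impI)
      fix m n assume mn: "N \<le> m" "N \<le> n"
      have h1: "\<bar>a (m + m) - L\<bar> < e\<^sup>2 / 4" using N mn by auto
      have h2: "\<bar>a (m + n) - L\<bar> < e\<^sup>2 / 4" using N mn by auto
      have h3: "\<bar>a (n + n) - L\<bar> < e\<^sup>2 / 4" using N mn by auto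
      have g1: "a (m + m) - L < e\<^sup>2 / 4" and g2: "- (a (m + n) - L) < e\<^sup>2 / 4"
        and g3: "a (n + n) - L < e\<^sup>2 / 4" using h1 h2 h3 unfolding abs_less_iff by auto
      have "(norm (s m - s n))\<^sup>2 < e\<^sup>2" unfolding ns by (rule aux3[OF g1 g2 g3])
      then show "norm (s m - s n) < e" using e by (simp add: power_less_imp_less_base)
    qed
  qed
  then obtain z where z: "s \<longlonglongrightarrow> z" by (auto simp: Cauchy_convergent_iff convergent_def)
  have "(\<lambda>k. A (s k)) \<longlonglongrightarrow> A z" by (rule bounded_linear.tendsto[OF A_bl z])
  moreover have "(\<lambda>k. A (s k)) = (\<lambda>k. s (Suc k))" by (simp add: s_def fun_eq_iff)
  ultimately have "(\<lambda>k. s (Suc k)) \<longlonglongrightarrow> A z" by simp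
  moreover have "(\<lambda>k. s (Suc k)) \<longlonglongrightarrow> z" using z by (rule LIMSEQ_Suc)
  ultimately have Az: "A z = z" using LIMSEQ_unique by blast
  have zW: "z \<in> W" using closed_sequentially[OF W_closed _ z] it_in[OF y] by (simp add: s_def)
  have zSp: "z \<in> Sp" using W_Sp[OF zW] .
  have "(norm (Q z))\<^sup>2 = (norm z)\<^sup>2" using A_quad[OF zSp] Az by (simp add: power2_norm_eq_inner)
  then have "(norm (z - Q z))\<^sup>2 = 0" using pT.p_pyth[of z] by simp
  then have "Q z = z" by simp
  then have "z \<in> T" using pT.p_in[of z] by simp
  then have "inner z z = 0" using W_orth[OF zW zSp] by blast
  then have "z = 0" by simp
  then show ?thesis using z by (simp add: s_def)
qed

end

context gap
begin

lemma dbound: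
  assumes t: "lam < t" "t < 1" and y: "y \<in> W"
  shows "inner (A y) y \<le> (2 * t / (1 + t)) * (norm y)\<^sup>2"
proof -
  have ySp: "y \<in> Sp" using W_Sp[OF y] .
  define a where "a = (\<lambda>j. inner ((A ^^ j) y) y)"
  define d where "d = (\<lambda>j. a j - a (Suc j))"
  have ai: "inner ((A ^^ i) y) ((A ^^ j) y) = a (i + j)" for i j unfolding a_def by (rule it_inner[OF ySp])
  have t0: "0 \<le> t" using t lam0 by simp
  have F1: "d (2 * k + 1) \<le> t * d (2 * k)" for k
  proof -
    define v where "v = (A ^^ k) y"
    have vSp: "v \<in> Sp" using it_Sp[OF ySp] by (simp add: v_def)
    have "0 \<le> (norm (A v))\<^sup>2 - (1 + t) * inner (A v) v + t * (norm v)\<^sup>2" by (rule ii[OF t vSp])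
    moreover have "(norm (A v))\<^sup>2 = a (2 * k + 2)" using a_even2[OF ySp, of k] by (simp add: a_def v_def)
    moreover have "inner (A v) v = a (2 * k + 1)" using a_odd[OF ySp, of k] by (simp add: a_def v_def)
    moreover have "(norm v)\<^sup>2 = a (2 * k)" using a_even[OF ySp, of k] by (simp add: a_def v_def)
    ultimately show ?thesis by (simp add: d_def algebra_simps)
  qed
  have F2: "d (2 * k + 2) \<le> d (2 * k + 1)" for k
  proof -
    define v where "v = (A ^^ k) y"
    have vSp: "v \<in> Sp" using it_Sp[OF ySp] by (simp add: v_def)
    have uSp: "v - A v \<in> Sp" using vSp A_Sp sSp by (simp add: subspace_diff)
    have "0 \<le> inner (A (v - A v)) (v - A v)" using A_quad[OF uSp] by simp
    also have "\<dots> = inner (A v) v - inner (A v) (A v) - inner (A (A v)) v + inner (A (A v)) (A v)"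
      by (simp add: A_diff inner_diff_left inner_diff_right inner_commute)
    also have "inner (A v) v = a (2 * k + 1)" using ai[of "Suc k" k] by (simp add: v_def mult_2)
    also have "inner (A v) (A v) = a (2 * k + 2)" using ai[of "Suc k" "Suc k"] by (simp add: v_def mult_2)
    also have "inner (A (A v)) v = a (2 * k + 2)" using ai[of "Suc (Suc k)" k] by (simp add: v_def mult_2)
    also have "inner (A (A v)) (A v) = a (2 * k + 3)" using ai[of "Suc (Suc k)" "Suc k"] by (simp add: v_def mult_2 numeral_eq_Suc)
    finally show ?thesis by (simp add: d_def algebra_simps numeral_eq_Suc)
  qed
  have dnn: "0 \<le> d j" for j using a_dec[OF ySp, of j] by (simp add: d_def a_def)
  have Dk: "d (2 * k) \<le> t ^ k * d 0" for k
  proof (induction k)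
    case 0 then show ?case by simp
  next
    case (Suc k)
    have "d (2 * Suc k) = d (2 * k + 2)" by simp
    also have "\<dots> \<le> d (2 * k + 1)" by (rule F2)
    also have "\<dots> \<le> t * d (2 * k)" by (rule F1)
    also have "\<dots> \<le> t * (t ^ k * d 0)" using Suc.IH t0 by (intro mult_left_mono)
    finally show ?case by simp
  qed
  have Sk: "a 0 - a (2 * n) \<le> (1 + t) * d 0 * ((1 - t ^ n) / (1 - t))" for n
  proof (induction n)
    case 0 then show ?case by simp
  next
    case (Suc n)
    have step: "a (2 * n) - a (2 * Suc n) = d (2 * n) + d (2 * n + 1)" by (simp add: d_def)
    have "d (2 * n + 1) \<le> t * (t ^ n * d 0)"
      using F1[of n] Dk[of n] t0 by (meson mult_left_mono order_trans)
    then have "a (2 * n) - a (2 * Suc n) \<le> t ^ n * d 0 + t * (t ^ n * d 0)" using step Dk[of n] by linarith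
    also have "\<dots> = (1 + t) * d 0 * t ^ n" by (simp add: algebra_simps)
    finally have "a 0 - a (2 * Suc n) \<le> (1 + t) * d 0 * ((1 - t ^ n) / (1 - t)) + (1 + t) * d 0 * t ^ n"
      using Suc.IH by linarith
    also have "\<dots> = (1 + t) * d 0 * ((1 - t ^ Suc n) / (1 - t))"
      using t by (simp add: field_simps)
    finally show ?case .
  qed
  have Sb: "a 0 - a (2 * n) \<le> (1 + t) * d 0 / (1 - t)" for n
  proof -
    have "(1 - t ^ n) / (1 - t) \<le> 1 / (1 - t)" using t t0 by (simp add: divide_right_mono)
    then have "(1 + t) * d 0 * ((1 - t ^ n) / (1 - t)) \<le> (1 + t) * d 0 * (1 / (1 - t))"
      using dnn[of 0] t0 by (intro mult_left_mono) auto
    then show ?thesis using Sk[of n] by simp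
  qed
  have "(\<lambda>n. norm ((A ^^ n) y)) \<longlonglongrightarrow> 0" using tendsto_norm[OF conv0[OF y]] by simp
  then have "(\<lambda>n. (norm ((A ^^ n) y))\<^sup>2) \<longlonglongrightarrow> 0\<^sup>2" by (rule tendsto_power)
  then have "(\<lambda>n. a (2 * n)) \<longlonglongrightarrow> 0" using a_even[OF ySp] by (simp add: a_def)
  then have "(\<lambda>n. a 0 - a (2 * n)) \<longlonglongrightarrow> a 0 - 0" by (intro tendsto_diff tendsto_const)
  then have "a 0 - 0 \<le> (1 + t) * d 0 / (1 - t)" by (rule LIMSEQ_le_const2) (use Sb in auto)
  then have "a 0 * (1 - t) \<le> (1 + t) * d 0" using t by (simp add: field_simps)
  then have "(1 + t) * a 1 \<le> 2 * t * a 0" by (simp add: d_def algebra_simps)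
  then have "a 1 \<le> (2 * t / (1 + t)) * a 0" using t0 by (simp add: field_simps)
  moreover have "a 1 = inner (A y) y" by (simp add: a_def)
  moreover have "a 0 = (norm y)\<^sup>2" by (simp add: a_def power2_norm_eq_inner)
  ultimately show ?thesis by simp
qed

end



context gap
begin

lemma quad_bound: "\<forall>y\<in>W. inner (A y) y \<le> lam * (norm y)\<^sup>2"
proof (rule ccontr)
  assume "\<not> (\<forall>y\<in>W. inner (A y) y \<le> lam * (norm y)\<^sup>2)"
  then obtain y0 where y0: "y0 \<in> W" "inner (A y0) y0 > lam * (norm y0)\<^sup>2" by auto
  have y00: "y0 \<noteq> 0" using y0 by auto
  define t0 where "t0 = (lam + 1) / 2"
  have t0: "lam < t0" "t0 < 1" using lam1 by (auto simp: t0_def)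
  define \<kappa> where "\<kappa> = 2 * t0 / (1 + t0)"
  have k1: "\<kappa> < 1" using t0 lam0 by (simp add: \<kappa>_def field_simps)
  have ascl: "\<forall>x\<in>W. \<forall>a. A (a *\<^sub>R x) = a *\<^sub>R A x" by (simp add: A_scale)
  have abd: "\<forall>x\<in>W. norm (A x) \<le> 1 * norm x" by (simp add: A_norm)
  define \<nu> where "\<nu> = Sup {inner (A w) w | w. w \<in> W \<and> norm w = 1}"
  note nr = nr_sup[OF W_sub ascl abd y0(1) y00, folded \<nu>_def]
  have "inner (A y0) y0 \<le> \<nu> * (norm y0)\<^sup>2" using nr(1) y0 by blast
  then have "lam * (norm y0)\<^sup>2 < \<nu> * (norm y0)\<^sup>2" using y0 by linarith
  then have nl: "lam < \<nu>" using y00 by (simp add: mult_less_cancel_right)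
  have nk: "\<nu> \<le> \<kappa>"
    unfolding \<nu>_def
  proof (rule cSup_least)
    show "{inner (A w) w | w. w \<in> W \<and> norm w = 1} \<noteq> {}"
      using y0 y00 W_sub by (auto intro!: exI[of _ "(1 / norm y0) *\<^sub>R y0"] simp: subspace_scale)
    fix r assume "r \<in> {inner (A w) w | w. w \<in> W \<and> norm w = 1}"
    then obtain w where w: "w \<in> W" "norm w = 1" "r = inner (A w) w" by auto
    show "r \<le> \<kappa>" using dbound[OF t0 w(1)] w by (simp add: \<kappa>_def)
  qed
  have n1: "\<nu> < 1" using nk k1 by simp
  obtain C where C: "C \<ge> 0" "\<forall>x\<in>Sp. norm x \<le> C * norm (A x - \<nu> *\<^sub>R x)" using bb[OF nl n1] by blast
  have e0: "1 / (C + 1) > 0" using C by simp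
  have aadd: "\<forall>x\<in>W. \<forall>y\<in>W. A (x + y) = A x + A y" by (simp add: A_add)
  have asa: "\<forall>x\<in>W. \<forall>y\<in>W. inner (A x) y = inner x (A y)" using A_sa W_Sp by blast
  have aW: "\<forall>x\<in>W. A x \<in> W" using A_W by blast
  obtain w where w: "w \<in> W" "norm w = 1" "norm (A w - \<nu> *\<^sub>R w) < 1 / (C + 1)"
    using nr_core[OF W_sub aW aadd ascl asa abd nr(1) nr(2) e0] by blast
  have "1 \<le> C * norm (A w - \<nu> *\<^sub>R w)" using C(2) W_Sp[OF w(1)] w(2) by force
  also have "\<dots> \<le> C * (1 / (C + 1))" using w C by (intro mult_left_mono) auto
  also have "\<dots> < 1" using C by (simp add: field_simps)
  finally show False by simp
qed

lemma norm_bound: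
  assumes y: "y \<in> W"
  shows "norm (A y) \<le> lam * norm y"
proof -
  have Qb: "norm (Q x) \<le> sqrt lam * norm x" if x: "x \<in> W" for x
  proof -
    have "(norm (Q x))\<^sup>2 \<le> lam * (norm x)\<^sup>2" using quad_bound x A_quad[OF W_Sp[OF x]] by metis
    then have "sqrt ((norm (Q x))\<^sup>2) \<le> sqrt (lam * (norm x)\<^sup>2)" by (rule real_sqrt_le_mono)
    then show ?thesis by (simp add: real_sqrt_mult)
  qed
  have AyW: "A y \<in> W" using A_W[OF y] .
  have "(norm (A y))\<^sup>2 = inner (A y) (A y)" by (simp add: power2_norm_eq_inner)
  also have "\<dots> = inner (Q y) (A y)" using A_inner[OF W_Sp[OF AyW]] .
  also have "\<dots> = inner (Q (Q y)) (A y)" by (simp add: pT.p_idem)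
  also have "\<dots> = inner (Q y) (Q (A y))" by (rule pT.p_sa)
  also have "\<dots> \<le> norm (Q y) * norm (Q (A y))" by (rule norm_cauchy_schwarz)
  also have "\<dots> \<le> (sqrt lam * norm y) * (sqrt lam * norm (A y))"
    using Qb[OF y] Qb[OF AyW] lam0 by (intro mult_mono) auto
  also have "\<dots> = lam * norm y * norm (A y)" using lam0 by (simp add: algebra_simps)
  finally have h: "(norm (A y))\<^sup>2 \<le> lam * norm y * norm (A y)" .
  show ?thesis
  proof (cases "norm (A y) = 0")
    case True then show ?thesis using lam0 by simp
  next
    case False
    then have "norm (A y) > 0" by simp
    then show ?thesis using h by (simp add: power2_eq_square mult_le_cancel_right)
  qed
qed

end



lemma spec_le1:
  fixes S T :: "'a::{real_inner,complete_space} set"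
  assumes cS: "closed_subspace S" and cT: "closed_subspace T"
    and l: "l \<in> spectrum_on S (\<lambda>x. orth_proj S (orth_proj T x))"
  shows "l \<le> 1"
proof (rule ccontr)
  assume "\<not> l \<le> 1"
  then have l1: "l > 1" by simp
  interpret two S T by (rule two.intro[OF cS cT])
  have bl: "bounded_linear (\<lambda>x. P (Q x))" by (rule bounded_linear_compose[OF pS.p_bl pT.p_bl])
  have "l \<notin> spectrum_on S (\<lambda>x. P (Q x))"
    by (rule neumann[OF cS bl _ _ l1]) (use pS.p_in pS.p_norm pT.p_norm order_trans in blast)+
  then show False using l by simp
qed

lemma theta_lemma:
  fixes S T :: "'a::{real_inner,complete_space} set"
  assumes cS: "closed_subspace S" and cT: "closed_subspace T"
    and cpos: "cos (theta_max S T) > 0" and s0: "0 < \<sigma>" and sc: "\<sigma> < (cos (theta_max S T))\<^sup>2"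
  shows "\<sigma> \<notin> spectrum_on S (\<lambda>x. orth_proj S (orth_proj T x)) \<or> \<sigma> \<notin> spectrum_on T (\<lambda>x. orth_proj T (orth_proj S x))"
proof (rule ccontr)
  assume "\<not> ?thesis"
  then have inS: "\<sigma> \<in> spectrum_on S (\<lambda>x. orth_proj S (orth_proj T x))"
    and inT: "\<sigma> \<in> spectrum_on T (\<lambda>x. orth_proj T (orth_proj S x))" by auto
  define c where "c = cos (theta_max S T)"
  have c1: "c \<le> 1" by (simp add: c_def)
  have c0: "c > 0" using cpos by (simp add: c_def)
  have "c\<^sup>2 \<le> 1" using c1 c0 by (simp add: power_le_one)
  then have s1: "\<sigma> < 1" using sc by (simp add: c_def)
  define s where "s = sqrt \<sigma>"
  have ss: "s\<^sup>2 = \<sigma>" using s0 by (simp add: s_def)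
  have spos: "0 < s" "s < 1" using s0 s1 by (auto simp: s_def)
  define \<theta> where "\<theta> = arccos s"
  have hS: "\<theta> \<in> hatTheta S T" unfolding hatTheta_def \<theta>_def using spos ss inS by auto
  have hT: "\<theta> \<in> hatTheta T S" unfolding hatTheta_def \<theta>_def using spos ss inT by auto
  have cth: "cos \<theta> = s" using spos by (simp add: \<theta>_def)
  have thp: "\<theta> \<noteq> pi / 2"
  proof
    assume h: "\<theta> = pi / 2"
    have "cos \<theta> = 0" unfolding h by (rule cos_pi_half)
    then show False using cth spos by simp
  qed
  define X where "X = Theta S T - {pi / 2}"
  have thX: "\<theta> \<in> X" using hS hT thp by (simp add: X_def Theta_def)
  have Xb: "0 \<le> x \<and> x \<le> pi" if "x \<in> X" for x
  proof -
    from that have "x \<in> hatTheta S T" by (simp add: X_def Theta_def)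
    then obtain s' where s': "x = arccos s'" "s' \<ge> 0" "s'\<^sup>2 \<in> spectrum_on S (\<lambda>x. orth_proj S (orth_proj T x))"
      unfolding hatTheta_def by blast
    have "s'\<^sup>2 \<le> 1" by (rule spec_le1[OF cS cT s'(3)])
    then have "s' \<le> 1" using s'(2) by (simp add: power_le_one_iff)
    then show ?thesis using s' by (simp add: arccos_lbound arccos_ubound)
  qed
  have Xne: "X \<noteq> {}" using thX by blast
  have bdd: "bdd_above X" using Xb by (intro bdd_aboveI[of _ pi]) auto
  have tm: "theta_max S T = Sup X" using Xne by (simp add: theta_max_def X_def Let_def)
  have le1: "\<theta> \<le> Sup X" by (rule cSup_upper[OF thX bdd])
  have le2: "Sup X \<le> pi" by (rule cSup_least[OF Xne]) (use Xb in auto)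
  have th0: "0 \<le> \<theta>" "\<theta> \<le> pi" using Xb[OF thX] by auto
  have "cos (Sup X) \<le> cos \<theta>" using cos_mono_le_eq[of "Sup X" \<theta>] le1 le2 th0 by linarith
  then have "c \<le> s" using tm cth by (simp add: c_def)
  then have "c\<^sup>2 \<le> s\<^sup>2" using c0 by (simp add: power_mono)
  then show False using ss sc by (simp add: c_def)
qed

theorem mainTheorem14:
  fixes S T :: "'a::{real_inner, complete_space} set"
    and f xstar :: 'a and x :: "nat \<Rightarrow> 'a"
  assumes "closed_subspace S" and "closed_subspace T"
    and "cos (theta_max S T) > 0"
  defines "P \<equiv> orth_proj S" and "Q \<equiv> orth_proj T"
  defines "Pp \<equiv> (\<lambda>y. y - P y)" and "Qp \<equiv> (\<lambda>y. y - Q y)"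
  defines "b \<equiv> - Pp (Qp (P f))" and "K \<equiv> (\<lambda>y. Pp (Qp y))"
  assumes "xstar \<in> orthogonal_comp S" and "K xstar = b"
    and "\<forall>y \<in> orthogonal_comp S. K y = b \<longrightarrow> norm xstar \<le> norm y"
    and "x 0 = 0" and "\<And>m. x (Suc m) = (x m - K (x m)) + b"
  shows "\<forall>m. norm (x m - xstar) \<le> (1 - (cos (theta_max S T))\<^sup>2) ^ m * norm xstar"
proof -
  note cS = assms(1) and cT = assms(2) and cpos = assms(3)
  note xs = assms(10) and Kx = assms(11) and minn = assms(12) and x0 = assms(13) and xS = assms(14)
  have two_ST: "two S T" by (rule two.intro[OF cS cT])
  define c where "c = cos (theta_max S T)"
  define lam where "lam = 1 - c\<^sup>2"
  have c0: "c > 0" using cpos by (simp add: c_def)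
  have c1: "c \<le> 1" by (simp add: c_def)
  have lam0: "0 \<le> lam" using c0 c1 by (simp add: lam_def power_le_one)
  have lam1: "lam < 1" using c0 by (simp add: lam_def)
  have gapA: "t \<notin> spectrum_on (orthogonal_comp S) (two.A S T)" if t: "lam < t" "t < 1" for t
  proof -
    have s0: "0 < 1 - t" using t by simp
    have sc: "1 - t < (cos (theta_max S T))\<^sup>2" using t by (simp add: lam_def c_def)
    have "(1 - (1 - t)) \<notin> spectrum_on (orthogonal_comp S) (two.A S T)"
      by (rule two.spec_transfer[OF two_ST s0]) (use theta_lemma[OF cS cT cpos s0 sc] t lam0 in auto)
    then show ?thesis by simp
  qed
  have gap_inst: "gap S T lam"
    by (rule gap.intro[OF two_ST gap_axioms.intro]) (use lam0 lam1 gapA in auto)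
  interpret G: gap S T lam by (rule gap_inst)
  have hK: "K y = (y - orth_proj T y) - orth_proj S (y - orth_proj T y)" for y
    by (simp add: K_def Pp_def Qp_def P_def Q_def)
  have KSp: "K y \<in> orthogonal_comp S" for y unfolding hK by (rule G.pS.p_oc)
  have KA: "y - K y = G.A y" if "y \<in> orthogonal_comp S" for y using G.K_A[OF that] hK by simp
  have Kdiff: "K (u - v) = K u - K v" for u v
  proof -
    have e1: "u - v - orth_proj T (u - v) = (u - orth_proj T u) - (v - orth_proj T v)"
      by (simp add: G.q_diff)
    show ?thesis unfolding hK e1 G.p_diff by simp
  qed
  have bSp: "b \<in> orthogonal_comp S"
  proof -
    have "b = - ((P f - orth_proj T (P f)) - orth_proj S (P f - orth_proj T (P f)))"
      by (simp add: b_def Pp_def Qp_def Q_def P_def)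
    moreover have "(P f - orth_proj T (P f)) - orth_proj S (P f - orth_proj T (P f)) \<in> orthogonal_comp S"
      by (rule G.pS.p_oc)
    ultimately show ?thesis using G.sSp subspace_neg by metis
  qed
  have xSp: "x m \<in> orthogonal_comp S" for m
  proof (induction m)
    case 0 then show ?case using x0 G.sSp by (simp add: subspace_0)
  next
    case (Suc m)
    then show ?case unfolding xS using KSp bSp G.sSp by (intro subspace_add subspace_diff) auto
  qed
  have xsW: "xstar \<in> G.W"
  proof -
    have "\<forall>z\<in>orthogonal_comp S \<inter> T. orthogonal z xstar"
    proof
      fix z assume z: "z \<in> orthogonal_comp S \<inter> T"
      have Kz: "K z = 0" unfolding hK using z G.pS.p_id[OF subspace_0[OF G.pS.sV]] by (simp add: G.pT.p_id)
      define cc where "cc = inner xstar z"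
      define N where "N = (norm z)\<^sup>2"
      define r where "r = - cc / (N + 1)"
      have N0: "N \<ge> 0" by (simp add: N_def)
      have ySp: "xstar + r *\<^sub>R z \<in> orthogonal_comp S" using xs z G.sSp by (intro subspace_add subspace_scale) auto
      have "K (xstar + r *\<^sub>R z) = K xstar - K ((- r) *\<^sub>R z)" using Kdiff[of xstar "(- r) *\<^sub>R z"] by simp
      also have "K ((- r) *\<^sub>R z) = 0"
      proof -
        have zT': "(- r) *\<^sub>R z \<in> T" using z G.pT.sV subspace_scale by blast
        show ?thesis unfolding hK G.pT.p_id[OF zT'] using G.pS.p_id[OF subspace_0[OF G.pS.sV]] by simp
      qed
      finally have "K (xstar + r *\<^sub>R z) = b" using Kx by simp
      then have "norm xstar \<le> norm (xstar + r *\<^sub>R z)" using minn ySp by blast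
      then have "(norm xstar)\<^sup>2 \<le> (norm (xstar + r *\<^sub>R z))\<^sup>2" by (simp add: power_mono)
      also have "\<dots> = (norm xstar)\<^sup>2 + 2 * r * cc + r\<^sup>2 * N"
        unfolding cc_def N_def power2_norm_eq_inner
        by (simp add: inner_add_left inner_add_right inner_commute algebra_simps power2_eq_square)
      finally have "0 \<le> r * (2 * cc + r * N)" by (simp add: power2_eq_square algebra_simps)
      moreover have "r * (2 * cc + r * N) = - (cc\<^sup>2 * (N + 2) / (N + 1)\<^sup>2)"
        using N0 by (simp add: r_def field_simps power2_eq_square)
      ultimately have "cc\<^sup>2 * (N + 2) / (N + 1)\<^sup>2 \<le> 0" by simp
      then have "cc\<^sup>2 * (N + 2) \<le> 0" using N0 by (simp add: divide_le_0_iff)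
      then have "cc\<^sup>2 \<le> 0" using N0 by (simp add: mult_le_0_iff)
      then show "orthogonal z xstar" by (simp add: cc_def orthogonal_def inner_commute)
    qed
    then show ?thesis using xs by (simp add: G.W_def orthogonal_comp_def)
  qed
  have main: "x m - xstar \<in> G.W \<and> norm (x m - xstar) \<le> lam ^ m * norm xstar" for m
  proof (induction m)
    case 0
    have "- xstar \<in> G.W" using xsW G.W_sub by (simp add: subspace_neg)
    then show ?case using x0 by simp
  next
    case (Suc m)
    have eSp: "x m - xstar \<in> orthogonal_comp S" using Suc G.W_Sp by blast
    have "x (Suc m) - xstar = (x m - xstar) - K (x m - xstar)"
      unfolding xS Kdiff using Kx by (simp add: algebra_simps)
    also have "\<dots> = G.A (x m - xstar)" by (rule KA[OF eSp])
    finally have e: "x (Suc m) - xstar = G.A (x m - xstar)" .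
    have "norm (G.A (x m - xstar)) \<le> lam * norm (x m - xstar)" using G.norm_bound Suc by blast
    also have "\<dots> \<le> lam * (lam ^ m * norm xstar)" using Suc lam0 by (intro mult_left_mono) auto
    finally show ?case using e G.A_W Suc by simp
  qed
  show ?thesis using main by (simp add: lam_def c_def)
qed


end
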